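(* Let $\mathcal{D}=\mathcal{P}_{\mathcal{D}}\cup\mathcal{L}_{\mathcal{D}}$ be a stable dominating set of the incidence graph of an arbitrary projective plane $\Pi_q$ of order $q$ with $|\mathcal{D}|<3q-1$. Suppose there is a point $P$ with $|[P]\cap\mathcal{L}_{\mathcal{D}}|=q+1$. Then one of the following holds: (1) $\mathcal{L}_{\mathcal{D}}=[P]$, $P\notin\mathcal{P}_{\mathcal{D}}$, and $\mathcal{P}_{\mathcal{D}}\cup\{P\}$ is a blocking set of $\Pi_q$ in which every point other than possibly $P$ is essential; (2) there is a unique line $\ell$ not through $P$ such that $\mathcal{L}_{\mathcal{D}}=[P]\cup\{\ell\}$, $P\notin\mathcal{P}_{\mathcal{D}}$, and $\mathcal{P}_{\mathcal{D}}\cup\{P\}$ is a blocking set of the affine plane $\Pi_q\setminus\ell$ in which every point other than possibly $P$ is essential.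
   Context: A dominating set $\mathcal{D}=\mathcal{P}_{\mathcal{D}}\cup\mathcal{L}_{\mathcal{D}}$ of the incidence graph of $\Pi_q$ is a set of points and lines such that every point not in $\mathcal{P}_{\mathcal{D}}$ lies on a line of $\mathcal{L}_{\mathcal{D}}$ and every line not in $\mathcal{L}_{\mathcal{D}}$ contains a point of $\mathcal{P}_{\mathcal{D}}$. $\mathcal{D}$ is stable if it is minimal (no proper subset dominating) and there is no dominating set $\mathcal{D}'\supset\mathcal{D}$ with $|\mathcal{D}'|=|\mathcal{D}|+1$ that contains a dominating set of size less than $|\mathcal{D}|$. $[P]$ is the set of lines through $P$. A blocking set (of a projective or affine plane) is a point set meeting every line of that plane; a point $Q$ of a blocking set $\mathcal{B}$ is essential if $\mathcal{B}\setminus\{Q\}$ is not a blocking set. $\Pi_q\setminus\ell$ denotes the affine plane obtained by deleting the line $\ell$ and its points. *)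

theory Defs
  imports Main
begin

definition projective_plane ::
  "'p set \<Rightarrow> 'l set \<Rightarrow> ('p \<Rightarrow> 'l \<Rightarrow> bool) \<Rightarrow> nat \<Rightarrow> bool" where
  "projective_plane Pts Lns I q \<longleftrightarrow>
     finite Pts \<and> finite Lns \<and> q \<ge> 2 \<and>
     (\<forall>P\<in>Pts. \<forall>Q\<in>Pts. P \<noteq> Q \<longrightarrow> (\<exists>!l. l \<in> Lns \<and> I P l \<and> I Q l)) \<and>
     (\<forall>l\<in>Lns. \<forall>m\<in>Lns. l \<noteq> m \<longrightarrow> (\<exists>!P. P \<in> Pts \<and> I P l \<and> I P m)) \<and>
     (\<forall>l\<in>Lns. card {P\<in>Pts. I P l} = q + 1) \<and>
     (\<forall>P\<in>Pts. card {l\<in>Lns. I P l} = q + 1)"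

definition pencil :: "'l set \<Rightarrow> ('p \<Rightarrow> 'l \<Rightarrow> bool) \<Rightarrow> 'p \<Rightarrow> 'l set" where
  "pencil Lns I P = {l\<in>Lns. I P l}"

definition dominating ::
  "'p set \<Rightarrow> 'l set \<Rightarrow> ('p \<Rightarrow> 'l \<Rightarrow> bool) \<Rightarrow> 'p set \<Rightarrow> 'l set \<Rightarrow> bool" where
  "dominating Pts Lns I PD LD \<longleftrightarrow>
     PD \<subseteq> Pts \<and> LD \<subseteq> Lns \<and>
     (\<forall>P\<in>Pts - PD. \<exists>l\<in>LD. I P l) \<and>
     (\<forall>l\<in>Lns - LD. \<exists>P\<in>PD. I P l)"

definition minimal_dominating ::
  "'p set \<Rightarrow> 'l set \<Rightarrow> ('p \<Rightarrow> 'l \<Rightarrow> bool) \<Rightarrow> 'p set \<Rightarrow> 'l set \<Rightarrow> bool" where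
  "minimal_dominating Pts Lns I PD LD \<longleftrightarrow>
     dominating Pts Lns I PD LD \<and>
     \<not> (\<exists>PD' LD'. PD' \<subseteq> PD \<and> LD' \<subseteq> LD \<and> (PD', LD') \<noteq> (PD, LD) \<and>
                   dominating Pts Lns I PD' LD')"

(* |D| = |PD| + |LD| (points and lines are distinct vertices) *)
definition stable_dominating ::
  "'p set \<Rightarrow> 'l set \<Rightarrow> ('p \<Rightarrow> 'l \<Rightarrow> bool) \<Rightarrow> 'p set \<Rightarrow> 'l set \<Rightarrow> bool" where
  "stable_dominating Pts Lns I PD LD \<longleftrightarrow>
     minimal_dominating Pts Lns I PD LD \<and>
     \<not> (\<exists>PD' LD'. PD \<subseteq> PD' \<and> LD \<subseteq> LD' \<and>
          dominating Pts Lns I PD' LD' \<and>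
          card PD' + card LD' = card PD + card LD + 1 \<and>
          (\<exists>PD'' LD''. PD'' \<subseteq> PD' \<and> LD'' \<subseteq> LD' \<and>
             dominating Pts Lns I PD'' LD'' \<and>
             card PD'' + card LD'' < card PD + card LD))"

definition blocking_set ::
  "'p set \<Rightarrow> 'l set \<Rightarrow> ('p \<Rightarrow> 'l \<Rightarrow> bool) \<Rightarrow> 'p set \<Rightarrow> bool" where
  "blocking_set Pts Lns I B \<longleftrightarrow> B \<subseteq> Pts \<and> (\<forall>l\<in>Lns. \<exists>P\<in>B. I P l)"

definition essential ::
  "'p set \<Rightarrow> 'l set \<Rightarrow> ('p \<Rightarrow> 'l \<Rightarrow> bool) \<Rightarrow> 'p set \<Rightarrow> 'p \<Rightarrow> bool" where
  "essential Pts Lns I B Q \<longleftrightarrow> Q \<in> B \<and> \<not> blocking_set Pts Lns I (B - {Q})"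

definition aff_points :: "'p set \<Rightarrow> ('p \<Rightarrow> 'l \<Rightarrow> bool) \<Rightarrow> 'l \<Rightarrow> 'p set" where
  "aff_points Pts I l = {P\<in>Pts. \<not> I P l}"

definition aff_lines :: "'l set \<Rightarrow> 'l \<Rightarrow> 'l set" where
  "aff_lines Lns l = Lns - {l}"

end

theory Submission
  imports Defs
begin

theorem lemma2:
  fixes Pts :: "'p set" and Lns :: "'l set" and I :: "'p \<Rightarrow> 'l \<Rightarrow> bool"
    and q :: nat and PD :: "'p set" and LD :: "'l set" and P :: 'p
  assumes plane: "projective_plane Pts Lns I q"
    and stable: "stable_dominating Pts Lns I PD LD"
    and size: "card PD + card LD < 3 * q - 1"
    and P: "P \<in> Pts"
    and pencil_count: "card (pencil Lns I P \<inter> LD) = q + 1"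
  shows "(LD = pencil Lns I P \<and> P \<notin> PD \<and>
           blocking_set Pts Lns I (PD \<union> {P}) \<and>
           (\<forall>Q\<in>PD \<union> {P}. Q \<noteq> P \<longrightarrow> essential Pts Lns I (PD \<union> {P}) Q))
       \<or> (\<exists>!l. l \<in> Lns \<and> \<not> I P l \<and> LD = pencil Lns I P \<union> {l} \<and> P \<notin> PD \<and>
           blocking_set (aff_points Pts I l) (aff_lines Lns l) I (PD \<union> {P}) \<and>
           (\<forall>Q\<in>PD \<union> {P}. Q \<noteq> P \<longrightarrow>
              essential (aff_points Pts I l) (aff_lines Lns l) I (PD \<union> {P}) Q))"
proof -
  have finP: "finite Pts" and finL: "finite Lns" and q2: "q \<ge> 2"
    and lnpt: "\<forall>P\<in>Pts. \<forall>Q\<in>Pts. P \<noteq> Q \<longrightarrow> (\<exists>!l. l \<in> Lns \<and> I P l \<and> I Q l)"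
    and ptln: "\<forall>l\<in>Lns. \<forall>m\<in>Lns. l \<noteq> m \<longrightarrow> (\<exists>!P. P \<in> Pts \<and> I P l \<and> I P m)"
    and cp: "\<forall>P\<in>Pts. card {l\<in>Lns. I P l} = q + 1"
    using plane unfolding projective_plane_def by auto
  have dom: "dominating Pts Lns I PD LD"
    and mini: "\<not> (\<exists>PD' LD'. PD' \<subseteq> PD \<and> LD' \<subseteq> LD \<and> (PD', LD') \<noteq> (PD, LD) \<and>
                   dominating Pts Lns I PD' LD')"
    and stab: "\<not> (\<exists>PD' LD'. PD \<subseteq> PD' \<and> LD \<subseteq> LD' \<and>
          dominating Pts Lns I PD' LD' \<and>
          card PD' + card LD' = card PD + card LD + 1 \<and>
          (\<exists>PD'' LD''. PD'' \<subseteq> PD' \<and> LD'' \<subseteq> LD' \<and>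
             dominating Pts Lns I PD'' LD'' \<and>
             card PD'' + card LD'' < card PD + card LD))"
    using stable unfolding stable_dominating_def minimal_dominating_def by auto
  have PDs: "PD \<subseteq> Pts" and LDs: "LD \<subseteq> Lns"
    and domL: "\<forall>l\<in>Lns - LD. \<exists>P\<in>PD. I P l"
    using dom unfolding dominating_def by auto
  let ?pen = "pencil Lns I P"
  have finpen: "finite ?pen" using finL unfolding pencil_def by auto
  have cpen: "card ?pen = q + 1" using cp P unfolding pencil_def by auto
  have "?pen \<inter> LD = ?pen"
    using card_subset_eq[OF finpen _ ] pencil_count cpen by (metis inf_le1)
  hence pen: "?pen \<subseteq> LD" by blast
  have cover: "\<forall>Q\<in>Pts. \<exists>l\<in>?pen. I Q l"
  proof
    fix Q assume Q: "Q \<in> Pts"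
    show "\<exists>l\<in>?pen. I Q l"
    proof (cases "Q = P")
      case True
      have "?pen \<noteq> {}" using cpen by auto
      then show ?thesis using True unfolding pencil_def by auto
    next
      case False
      then obtain l where "l \<in> Lns" "I P l" "I Q l" using lnpt P Q by metis
      then show ?thesis unfolding pencil_def by auto
    qed
  qed
  have domI: "dominating Pts Lns I A B"
    if "A \<subseteq> Pts" "B \<subseteq> Lns" "?pen \<subseteq> B" "\<forall>l\<in>Lns - B. \<exists>P\<in>A. I P l" for A B
    using that cover unfolding dominating_def by blast
  have PnotPD: "P \<notin> PD"
  proof
    assume PP: "P \<in> PD"
    have "dominating Pts Lns I (PD - {P}) LD"
    proof (rule domI)
      show "\<forall>l\<in>Lns - LD. \<exists>Pa\<in>PD - {P}. I Pa l"
      proof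
        fix l assume l: "l \<in> Lns - LD"
        then obtain R where "R \<in> PD" "I R l" using domL by auto
        moreover have "\<not> I P l" using l pen unfolding pencil_def by auto
        ultimately show "\<exists>Pa\<in>PD - {P}. I Pa l" by auto
      qed
    qed (use PDs LDs pen in auto)
    moreover have "PD - {P} \<noteq> PD" using PP by auto
    ultimately show False using mini by (metis Diff_subset order_refl prod.inject)
  qed
  have noPD: "\<forall>Q\<in>PD. \<not> I Q l" if l: "l \<in> LD - ?pen" for l
  proof (rule ccontr)
    assume "\<not> (\<forall>Q\<in>PD. \<not> I Q l)"
    then obtain Q where Q: "Q \<in> PD" "I Q l" by auto
    have "dominating Pts Lns I PD (LD - {l})"
    proof (rule domI)
      show "\<forall>m\<in>Lns - (LD - {l}). \<exists>Pa\<in>PD. I Pa m" using domL Q by auto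
    qed (use PDs LDs pen l in auto)
    moreover have "LD - {l} \<noteq> LD" using l by auto
    ultimately show False using mini by (metis Diff_subset order_refl prod.inject)
  qed
  have ess: "\<exists>m\<in>Lns - LD. I Q m \<and> (\<forall>Q'\<in>PD. I Q' m \<longrightarrow> Q' = Q)" if Q: "Q \<in> PD" for Q
  proof (rule ccontr)
    assume H: "\<not> ?thesis"
    have "dominating Pts Lns I (PD - {Q}) LD"
    proof (rule domI)
      show "\<forall>m\<in>Lns - LD. \<exists>Pa\<in>PD - {Q}. I Pa m"
      proof
        fix m assume m: "m \<in> Lns - LD"
        then obtain R where R: "R \<in> PD" "I R m" using domL by auto
        show "\<exists>Pa\<in>PD - {Q}. I Pa m"
        proof (cases "R = Q")
          case True thus ?thesis using H m R by auto
        next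
          case False thus ?thesis using R by auto
        qed
      qed
    qed (use PDs LDs pen in auto)
    moreover have "PD - {Q} \<noteq> PD" using Q by auto
    ultimately show False using mini by (metis Diff_subset order_refl prod.inject)
  qed
  have atmost: "l1 = l2" if l1: "l1 \<in> LD - ?pen" and l2: "l2 \<in> LD - ?pen" for l1 l2
  proof (rule ccontr)
    assume ne: "l1 \<noteq> l2"
    obtain R where R: "R \<in> Pts" "I R l1" "I R l2" using ptln l1 l2 LDs ne by blast
    have RPD: "R \<notin> PD" using noPD[OF l1] R by auto
    have finPD: "finite PD" using PDs finP finite_subset by blast
    have finLD: "finite LD" using LDs finL finite_subset by blast
    have d1: "dominating Pts Lns I (insert R PD) LD"
      using dom R unfolding dominating_def by auto
    have c1: "card (insert R PD) + card LD = card PD + card LD + 1"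
      using finPD RPD by simp
    have d2: "dominating Pts Lns I (insert R PD) (LD - {l1, l2})"
    proof (rule domI)
      show "\<forall>m\<in>Lns - (LD - {l1, l2}). \<exists>Pa\<in>insert R PD. I Pa m" using domL R by auto
    qed (use PDs LDs pen R l1 l2 in auto)
    have "card (LD - {l1, l2}) = card LD - 2" using l1 l2 ne finLD
      by (simp add: card_Diff_subset)
    moreover have "card LD \<ge> 2" using l1 l2 ne finLD
      by (metis DiffD1 card_2_iff card_mono empty_subsetI insert_subset)
    ultimately have c2: "card (insert R PD) + card (LD - {l1, l2}) < card PD + card LD"
      using finPD RPD by simp
    have "insert R PD \<subseteq> insert R PD" "LD - {l1,l2} \<subseteq> LD" "PD \<subseteq> insert R PD" by auto
    thus False using stab d1 c1 d2 c2 by (metis order_refl)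
  qed
  show ?thesis
  proof (cases "LD = ?pen")
    case True
    have bl: "blocking_set Pts Lns I (PD \<union> {P})"
      unfolding blocking_set_def
    proof (intro conjI ballI)
      show "PD \<union> {P} \<subseteq> Pts" using PDs P by auto
    next
      fix m assume m: "m \<in> Lns"
      show "\<exists>Pa\<in>PD \<union> {P}. I Pa m"
      proof (cases "I P m")
        case True thus ?thesis by auto
      next
        case False
        hence "m \<in> Lns - LD" using True m unfolding pencil_def by auto
        thus ?thesis using domL by auto
      qed
    qed
    have "\<forall>Q\<in>PD \<union> {P}. Q \<noteq> P \<longrightarrow> essential Pts Lns I (PD \<union> {P}) Q"
    proof (intro ballI impI)
      fix Q assume Q: "Q \<in> PD \<union> {P}" "Q \<noteq> P"
      hence QPD: "Q \<in> PD" by auto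
      obtain m where m: "m \<in> Lns - LD" "I Q m" "\<forall>Q'\<in>PD. I Q' m \<longrightarrow> Q' = Q"
        using ess[OF QPD] by blast
      have "\<not> I P m" using m True unfolding pencil_def by auto
      hence "\<not> (\<exists>Pa\<in>(PD \<union> {P}) - {Q}. I Pa m)" using m by auto
      moreover have "m \<in> Lns" using m by blast
      ultimately have "\<not> blocking_set Pts Lns I ((PD \<union> {P}) - {Q})"
        unfolding blocking_set_def by blast
      thus "essential Pts Lns I (PD \<union> {P}) Q"
        unfolding essential_def using Q(1) by blast
    qed
    thus ?thesis using True PnotPD bl by blast
  next
    case False
    then obtain l where l: "l \<in> LD - ?pen" using pen by blast
    have LDeq: "LD = ?pen \<union> {l}" using atmost l pen by blast
    have lL: "l \<in> Lns" and nPl: "\<not> I P l" using l LDs unfolding pencil_def by auto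
    have bl: "blocking_set (aff_points Pts I l) (aff_lines Lns l) I (PD \<union> {P})"
      unfolding blocking_set_def
    proof (intro conjI ballI)
      show "PD \<union> {P} \<subseteq> aff_points Pts I l"
        using PDs P nPl noPD[OF l] unfolding aff_points_def by auto
    next
      fix m assume m: "m \<in> aff_lines Lns l"
      show "\<exists>Pa\<in>PD \<union> {P}. I Pa m"
      proof (cases "I P m")
        case True thus ?thesis by auto
      next
        case False
        hence "m \<in> Lns - LD" using LDeq m unfolding pencil_def aff_lines_def by auto
        thus ?thesis using domL by auto
      qed
    qed
    have es: "\<forall>Q\<in>PD \<union> {P}. Q \<noteq> P \<longrightarrow>
              essential (aff_points Pts I l) (aff_lines Lns l) I (PD \<union> {P}) Q"
    proof (intro ballI impI)
      fix Q assume Q: "Q \<in> PD \<union> {P}" "Q \<noteq> P"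
      hence QPD: "Q \<in> PD" by auto
      obtain m where m: "m \<in> Lns - LD" "I Q m" "\<forall>Q'\<in>PD. I Q' m \<longrightarrow> Q' = Q"
        using ess[OF QPD] by blast
      have "\<not> I P m" using m pen unfolding pencil_def by auto
      hence "\<not> (\<exists>Pa\<in>(PD \<union> {P}) - {Q}. I Pa m)" using m by auto
      moreover have "m \<in> aff_lines Lns l" using m LDeq unfolding aff_lines_def by auto
      ultimately have "\<not> blocking_set (aff_points Pts I l) (aff_lines Lns l) I ((PD \<union> {P}) - {Q})"
        unfolding blocking_set_def by blast
      thus "essential (aff_points Pts I l) (aff_lines Lns l) I (PD \<union> {P}) Q"
        unfolding essential_def using Q(1) by blast
    qed
    have uniq: "l' = l" if "l' \<in> Lns" "\<not> I P l'" "LD = ?pen \<union> {l'}" for l'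
    proof -
      have "l' \<in> ?pen \<union> {l}" using that(3) LDeq by blast
      moreover have "l' \<notin> ?pen" using that(2) unfolding pencil_def by simp
      ultimately show ?thesis by blast
    qed
    show ?thesis
      apply (rule disjI2)
      apply (rule ex1I[of _ l])
      subgoal using lL nPl LDeq PnotPD bl es by blast
      subgoal for l' using uniq by blast
      done
  qed
qed

end
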